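(* Let $U,V$ be Banach spaces, $L=L(V,U)$ the space of bounded linear maps with operator norm, $T>0$, $\alpha\in(0,1]$, $\beta\in(0,1]$, and let $F:[0,T]\times C^{\alpha}([0,T],U)\to L$ be non-anticipating and $(\alpha,\beta)$-Hölder continuous with constants $c_{\alpha,\beta},\tilde c_{\alpha,\beta}$. Fix $0\le t_0\le t_1\le T$. Then for every $Y,Z\in C^{\alpha}([0,t_1],U)$, $$\|F(\cdot,Y)\|_{\alpha\beta;[t_0,t_1]}\le c_{\alpha,\beta}\left(1+\|Y\|_{\alpha;[t_0,t_1]}^{\beta}\right).$$ Moreover, if $\|Y\|_{\alpha;[t_0,t_1]}\le R$ and $\|Z\|_{\alpha;[t_0,t_1]}\le R$, then for every $\theta\in(0,1)$, $$\|F(\cdot,Y)-F(\cdot,Z)\|_{\alpha\beta\theta;[t_0,t_1]}\le 2\,\tilde c_{\alpha,\beta}^{1-\theta}c_{\alpha,\beta}^{\theta}(1+R^{\beta})^{\theta}\left(\|Y-Z\|_{\alpha;[0,t_1]}+|Y_0-Z_0|\right)^{\beta(1-\theta)}.$$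
   Context: For a path $Z$ on an interval $I$, $\|Z\|_{\alpha;I}:=\sup_{s,t\in I,s\neq t}|Z_t-Z_s|/|t-s|^{\alpha}$; $C^{\alpha}(I,U)$ denotes paths with finite such seminorm. For $Y\in C([0,T],U)$ and $t\in[0,T]$ put $\mathcal{Y}_t(x):=Y_{t\wedge x}$. $F$ is non-anticipating if $F(t,Y)=F(t,\mathcal{Y}_t)$ for all $t,Y$; for a path $Y$ defined only on $[0,t_1]$ and $t\le t_1$, $F(t,Y)$ means $F(t,\bar Y)$ for any extension $\bar Y\in C^\alpha([0,T],U)$ (e.g. constant after $t_1$), which is well defined by non-anticipation. $F$ is $(\alpha,\beta)$-Hölder continuous if there are constants $c_{\alpha,\beta},\tilde c_{\alpha,\beta}\ge0$ such that for all $Y,\tilde Y\in C^{\alpha}([0,T],U)$ and $s,t\in[0,T]$: $|F(t,Y)-F(s,Y)|\le c_{\alpha,\beta}(1+\|Y\|_{\alpha;[s\wedge t,s\vee t]}^{\beta})|t-s|^{\alpha\beta}$ and $|F(s,Y)-F(s,\tilde Y)|\le\tilde c_{\alpha,\beta}(\|Y-\tilde Y\|_{\alpha;[0,s]}+|Y_0-\tilde Y_0|)^{\beta}$. *)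

theory Defs
  imports "HOL-Analysis.Analysis"
begin

definition hquot :: "real \<Rightarrow> real set \<Rightarrow> (real \<Rightarrow> 'a::real_normed_vector) \<Rightarrow> real set" where
  "hquot a I Z = {norm (Z t - Z s) / \<bar>t - s\<bar> powr a | s t. s \<in> I \<and> t \<in> I \<and> s \<noteq> t}"

definition holder :: "real \<Rightarrow> real set \<Rightarrow> (real \<Rightarrow> 'a::real_normed_vector) \<Rightarrow> bool" where
  "holder a I Z \<longleftrightarrow> bdd_above (hquot a I Z)"

text \<open>The Hoelder seminorm (sup over the empty set taken as 0).\<close>
definition hsemi :: "real \<Rightarrow> real set \<Rightarrow> (real \<Rightarrow> 'a::real_normed_vector) \<Rightarrow> real" where
  "hsemi a I Z = Sup ({0} \<union> hquot a I Z)"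

text \<open>A path given on [0,t1] extended constantly (paths are regarded as functions on [0,T];
  values outside are normalised by clipping).\<close>
definition pext :: "real \<Rightarrow> (real \<Rightarrow> 'a) \<Rightarrow> real \<Rightarrow> 'a" where
  "pext t1 Y = (\<lambda>x. Y (max 0 (min t1 x)))"

text \<open>Non-anticipating: F(t,Y) = F(t, Y_{t \<and> .}); the clipping at 0 expresses that F only
  sees the path on [0,T].\<close>
definition non_anticipating ::
  "real \<Rightarrow> real \<Rightarrow> (real \<Rightarrow> (real \<Rightarrow> 'u::real_normed_vector) \<Rightarrow> 'l) \<Rightarrow> bool" where
  "non_anticipating a T F \<longleftrightarrow>
     (\<forall>t\<in>{0..T}. \<forall>Y. holder a {0..T} Y \<longrightarrow> F t Y = F t (pext t Y))"

definition holder_cont ::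
  "real \<Rightarrow> real \<Rightarrow> real \<Rightarrow> real \<Rightarrow> real \<Rightarrow>
   (real \<Rightarrow> (real \<Rightarrow> 'u::real_normed_vector) \<Rightarrow> 'l::real_normed_vector) \<Rightarrow> bool" where
  "holder_cont a b T c ct F \<longleftrightarrow> c \<ge> 0 \<and> ct \<ge> 0 \<and>
     (\<forall>Y Y'. holder a {0..T} Y \<longrightarrow> holder a {0..T} Y' \<longrightarrow>
       (\<forall>s\<in>{0..T}. \<forall>t\<in>{0..T}.
          norm (F t Y - F s Y) \<le> c * (1 + hsemi a {min s t..max s t} Y powr b) * \<bar>t - s\<bar> powr (a * b)
        \<and> norm (F s Y - F s Y') \<le> ct * (hsemi a {0..s} (\<lambda>x. Y x - Y' x) + norm (Y 0 - Y' 0)) powr b))"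

end

theory Submission imports Defs begin

lemma hsemi_nonneg: "holder a I Z \<Longrightarrow> 0 \<le> hsemi a I Z"
  unfolding hsemi_def holder_def
  by (intro cSup_upper) auto

lemma hsemi_bound:
  assumes "holder a I Z" "s \<in> I" "t \<in> I" "s \<noteq> t"
  shows "norm (Z t - Z s) \<le> hsemi a I Z * \<bar>t - s\<bar> powr a"
proof -
  have "norm (Z t - Z s) / \<bar>t - s\<bar> powr a \<le> hsemi a I Z"
  proof -
    have "norm (Z t - Z s) / \<bar>t - s\<bar> powr a \<in> hquot a I Z"
      unfolding hquot_def using assms by blast
    moreover have "bdd_above ({0} \<union> hquot a I Z)" using assms(1) unfolding holder_def by simp
    ultimately show ?thesis unfolding hsemi_def by (intro cSup_upper) auto
  qed
  moreover have "\<bar>t - s\<bar> powr a > 0" using assms by simp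
  ultimately show ?thesis by (simp add: divide_le_eq)
qed

lemma holder_of_bound:
  assumes "K \<ge> 0" "\<And>s t. s \<in> I \<Longrightarrow> t \<in> I \<Longrightarrow> s \<noteq> t \<Longrightarrow> norm (Z t - Z s) \<le> K * \<bar>t - s\<bar> powr a"
  shows "holder a I Z \<and> hsemi a I Z \<le> K"
proof -
  have q: "q \<le> K" if qin: "q \<in> hquot a I Z" for q
  proof -
    obtain s t where st: "s \<in> I" "t \<in> I" "s \<noteq> t" "q = norm (Z t - Z s) / \<bar>t - s\<bar> powr a"
      using qin unfolding hquot_def by auto
    have "\<bar>t - s\<bar> powr a > 0" using st by simp
    then show ?thesis using assms(2)[OF st(1-3)] st(4) by (simp add: divide_le_eq)
  qed
  have "holder a I Z" unfolding holder_def bdd_above_def using q by blast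
  moreover have "hsemi a I Z \<le> K" unfolding hsemi_def
    using q assms(1) by (intro cSup_least) auto
  ultimately show ?thesis by blast
qed

lemma holder_mono:
  assumes "holder a I Z" "J \<subseteq> I"
  shows "holder a J Z \<and> hsemi a J Z \<le> hsemi a I Z"
proof (rule holder_of_bound)
  show "0 \<le> hsemi a I Z" using hsemi_nonneg[OF assms(1)] .
  fix s t assume "s \<in> J" "t \<in> J" "s \<noteq> t"
  then show "norm (Z t - Z s) \<le> hsemi a I Z * \<bar>t - s\<bar> powr a"
    using hsemi_bound[OF assms(1)] assms(2) by blast
qed

lemma hquot_cong: assumes "\<And>x. x \<in> I \<Longrightarrow> Z x = Z' x" shows "hquot a I Z = hquot a I Z'"
  unfolding hquot_def by (intro Collect_cong ex_cong1) (use assms in auto)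

lemma hsemi_cong: "(\<And>x. x \<in> I \<Longrightarrow> Z x = Z' x) \<Longrightarrow> hsemi a I Z = hsemi a I Z'"
  unfolding hsemi_def using hquot_cong by metis

lemma holder_cong: "(\<And>x. x \<in> I \<Longrightarrow> Z x = Z' x) \<Longrightarrow> holder a I Z = holder a I Z'"
  unfolding holder_def using hquot_cong by metis

lemma holder_diff:
  assumes "holder a I Y" "holder a I Z"
  shows "holder a I (\<lambda>x. Y x - Z x)"
proof -
  have "norm ((Y t - Z t) - (Y s - Z s)) \<le> (hsemi a I Y + hsemi a I Z) * \<bar>t - s\<bar> powr a"
    if "s \<in> I" "t \<in> I" "s \<noteq> t" for s t
  proof -
    have "norm ((Y t - Z t) - (Y s - Z s)) \<le> norm (Y t - Y s) + norm (Z t - Z s)"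
    proof -
      have e: "(Y t - Z t) - (Y s - Z s) = (Y t - Y s) - (Z t - Z s)" by (simp add: algebra_simps)
      show ?thesis unfolding e by (rule norm_triangle_ineq4)
    qed
    then show ?thesis using hsemi_bound[OF assms(1) that] hsemi_bound[OF assms(2) that]
      by (simp add: distrib_right)
  qed
  then show ?thesis using holder_of_bound[of "hsemi a I Y + hsemi a I Z" I "\<lambda>x. Y x - Z x" a]
    hsemi_nonneg[OF assms(1)] hsemi_nonneg[OF assms(2)] by auto
qed

lemma pext_holder:
  assumes "holder a {0..t1} Y" "a \<ge> 0" "t1 \<ge> 0"
  shows "holder a S (pext t1 Y)"
proof -
  have "norm (pext t1 Y t - pext t1 Y s) \<le> hsemi a {0..t1} Y * \<bar>t - s\<bar> powr a" for s t
  proof (cases "max 0 (min t1 s) = max 0 (min t1 t)")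
    case True
    then show ?thesis using hsemi_nonneg[OF assms(1)] by (simp add: pext_def)
  next
    case False
    have "norm (pext t1 Y t - pext t1 Y s) \<le> hsemi a {0..t1} Y * \<bar>max 0 (min t1 t) - max 0 (min t1 s)\<bar> powr a"
      unfolding pext_def using False assms by (intro hsemi_bound) auto
    also have "\<dots> \<le> hsemi a {0..t1} Y * \<bar>t - s\<bar> powr a"
      using hsemi_nonneg[OF assms(1)] assms
      by (intro mult_left_mono powr_mono2) auto
    finally show ?thesis .
  qed
  then show ?thesis using holder_of_bound hsemi_nonneg[OF assms(1)] by blast
qed

lemma min_powr:
  fixes x A B th :: real
  assumes "0 \<le> x" "x \<le> A" "x \<le> B" "0 < th" "th < 1"
  shows "x \<le> A powr th * B powr (1 - th)"
proof (cases "x = 0")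
  case True then show ?thesis by simp
next
  case False
  then have "x = x powr th * x powr (1 - th)" using assms
    by (simp add: powr_add[symmetric])
  also have "\<dots> \<le> A powr th * B powr (1 - th)"
    using assms by (intro mult_mono powr_mono2) auto
  finally show ?thesis .
qed

lemma key1:
  fixes F :: "real \<Rightarrow> (real \<Rightarrow> 'u::banach) \<Rightarrow> 'l::real_normed_vector"
  assumes hc: "holder_cont a b T c ct F" and "a \<ge> 0" "b \<ge> 0"
    and "0 \<le> t0" "t0 \<le> t1" "t1 \<le> T"
    and Y: "holder a {0..t1} Y" and st: "s \<in> {t0..t1}" "t \<in> {t0..t1}"
  shows "norm (F t (pext t1 Y) - F s (pext t1 Y)) \<le> c * (1 + hsemi a {t0..t1} Y powr b) * \<bar>t - s\<bar> powr (a * b)"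
proof -
  have "0 \<le> t1" using assms by linarith
  then have hY: "holder a {0..T} (pext t1 Y)" using pext_holder[OF Y \<open>a \<ge> 0\<close>] by blast
  have "norm (F t (pext t1 Y) - F s (pext t1 Y)) \<le> c * (1 + hsemi a {min s t..max s t} (pext t1 Y) powr b) * \<bar>t - s\<bar> powr (a * b)"
    using hc hY st assms unfolding holder_cont_def by auto
  also have "hsemi a {min s t..max s t} (pext t1 Y) = hsemi a {min s t..max s t} Y"
    using st assms by (intro hsemi_cong) (auto simp: pext_def)
  also have "c * (1 + hsemi a {min s t..max s t} Y powr b) * \<bar>t - s\<bar> powr (a * b)
      \<le> c * (1 + hsemi a {t0..t1} Y powr b) * \<bar>t - s\<bar> powr (a * b)"
  proof -
    have "holder a {min s t..max s t} Y \<and> hsemi a {min s t..max s t} Y \<le> hsemi a {t0..t1} Y"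
    proof -
      have h: "holder a {t0..t1} Y \<and> hsemi a {t0..t1} Y \<le> hsemi a {0..t1} Y"
        using holder_mono[OF Y] assms by auto
      show ?thesis using holder_mono[of a "{t0..t1}" Y "{min s t..max s t}"] h st by auto
    qed
    then have "hsemi a {min s t..max s t} Y powr b \<le> hsemi a {t0..t1} Y powr b"
      using hsemi_nonneg assms by (intro powr_mono2) auto
    then show ?thesis using hc unfolding holder_cont_def
      by (intro mult_right_mono mult_left_mono) auto
  qed
  finally show ?thesis .
qed

theorem proposition4p10:
  fixes F :: "real \<Rightarrow> (real \<Rightarrow> 'u::banach) \<Rightarrow> ('v::banach \<Rightarrow>\<^sub>L 'u)"
    and T \<alpha> \<beta> c ct t0 t1 :: real
    and Y Z :: "real \<Rightarrow> 'u"
  assumes "T > 0" and "0 < \<alpha>" "\<alpha> \<le> 1" and "0 < \<beta>" "\<beta> \<le> 1"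
    and "non_anticipating \<alpha> T F"
    and "holder_cont \<alpha> \<beta> T c ct F"
    and "0 \<le> t0" "t0 \<le> t1" "t1 \<le> T"
    and "holder \<alpha> {0..t1} Y" "holder \<alpha> {0..t1} Z"
  shows "holder (\<alpha> * \<beta>) {t0..t1} (\<lambda>t. F t (pext t1 Y))
       \<and> hsemi (\<alpha> * \<beta>) {t0..t1} (\<lambda>t. F t (pext t1 Y)) \<le> c * (1 + hsemi \<alpha> {t0..t1} Y powr \<beta>)
       \<and> (\<forall>R \<theta>. hsemi \<alpha> {t0..t1} Y \<le> R \<longrightarrow> hsemi \<alpha> {t0..t1} Z \<le> R \<longrightarrow> 0 < \<theta> \<longrightarrow> \<theta> < 1 \<longrightarrow>
       holder (\<alpha> * \<beta> * \<theta>) {t0..t1} (\<lambda>t. F t (pext t1 Y) - F t (pext t1 Z))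
       \<and> hsemi (\<alpha> * \<beta> * \<theta>) {t0..t1} (\<lambda>t. F t (pext t1 Y) - F t (pext t1 Z))
         \<le> 2 * ct powr (1 - \<theta>) * c powr \<theta> * (1 + R powr \<beta>) powr \<theta>
            * (hsemi \<alpha> {0..t1} (\<lambda>x. Y x - Z x) + norm (Y 0 - Z 0)) powr (\<beta> * (1 - \<theta>)))"
proof -
  note hc = assms(7)
  have c0: "c \<ge> 0" "ct \<ge> 0" using hc unfolding holder_cont_def by auto
  have hYs1: "holder \<alpha> {t0..t1} Y"
    using holder_mono[OF assms(11), of "{t0..t1}"] assms by auto
  have hYs: "holder \<alpha> {t0..t1} Y" "hsemi \<alpha> {t0..t1} Y \<ge> 0"
    using hYs1 hsemi_nonneg[OF hYs1] by auto
  have hZs1: "holder \<alpha> {t0..t1} Z"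
    using holder_mono[OF assms(12), of "{t0..t1}"] assms by auto
  have hZs: "holder \<alpha> {t0..t1} Z" "hsemi \<alpha> {t0..t1} Z \<ge> 0"
    using hZs1 hsemi_nonneg[OF hZs1] by auto
  have k: "norm (F t (pext t1 W) - F s (pext t1 W)) \<le> c * (1 + hsemi \<alpha> {t0..t1} W powr \<beta>) * \<bar>t - s\<bar> powr (\<alpha> * \<beta>)"
    if "holder \<alpha> {0..t1} W" "s \<in> {t0..t1}" "t \<in> {t0..t1}" for W s t
    using key1[OF hc, of t0 t1 W s t] assms that by auto
  have P1: "holder (\<alpha> * \<beta>) {t0..t1} (\<lambda>t. F t (pext t1 Y))
       \<and> hsemi (\<alpha> * \<beta>) {t0..t1} (\<lambda>t. F t (pext t1 Y)) \<le> c * (1 + hsemi \<alpha> {t0..t1} Y powr \<beta>)"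
    using k[OF assms(11)] c0 by (intro holder_of_bound) auto
  have P2: "holder (\<alpha> * \<beta> * \<theta>) {t0..t1} (\<lambda>t. F t (pext t1 Y) - F t (pext t1 Z))
       \<and> hsemi (\<alpha> * \<beta> * \<theta>) {t0..t1} (\<lambda>t. F t (pext t1 Y) - F t (pext t1 Z))
         \<le> 2 * ct powr (1 - \<theta>) * c powr \<theta> * (1 + R powr \<beta>) powr \<theta>
            * (hsemi \<alpha> {0..t1} (\<lambda>x. Y x - Z x) + norm (Y 0 - Z 0)) powr (\<beta> * (1 - \<theta>))"
    if R: "hsemi \<alpha> {t0..t1} Y \<le> R" "hsemi \<alpha> {t0..t1} Z \<le> R" and th: "0 < \<theta>" "\<theta> < 1" for R \<theta>
  proof -
    define E where "E = hsemi \<alpha> {0..t1} (\<lambda>x. Y x - Z x) + norm (Y 0 - Z 0)"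
    define D where "D = (\<lambda>t. F t (pext t1 Y) - F t (pext t1 Z))"
    have hYZ: "holder \<alpha> {0..t1} (\<lambda>x. Y x - Z x)" using holder_diff assms by blast
    have E0: "E \<ge> 0" unfolding E_def using hsemi_nonneg[OF hYZ] by simp
    have R0: "R \<ge> 0" using R hYs by linarith
    have hYT: "holder \<alpha> {0..T} (pext t1 Y)" "holder \<alpha> {0..T} (pext t1 Z)"
    proof -
      have "0 \<le> t1" "0 \<le> \<alpha>" using assms by auto
      then show "holder \<alpha> {0..T} (pext t1 Y)" "holder \<alpha> {0..T} (pext t1 Z)"
        using pext_holder[OF assms(11)] pext_holder[OF assms(12)] by blast+
    qed
    have DB: "norm (D s) \<le> ct * E powr \<beta>" if "s \<in> {t0..t1}" for s
    proof -
      have "norm (D s) \<le> ct * (hsemi \<alpha> {0..s} (\<lambda>x. pext t1 Y x - pext t1 Z x) + norm (pext t1 Y 0 - pext t1 Z 0)) powr \<beta>"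
      proof -
        have "s \<in> {0..T}" using that assms by auto
        then show ?thesis using hc hYT unfolding holder_cont_def D_def by blast
      qed
      also have "hsemi \<alpha> {0..s} (\<lambda>x. pext t1 Y x - pext t1 Z x) = hsemi \<alpha> {0..s} (\<lambda>x. Y x - Z x)"
        using that assms by (intro hsemi_cong) (auto simp: pext_def)
      also have "norm (pext t1 Y 0 - pext t1 Z 0) = norm (Y 0 - Z 0)"
        using assms by (simp add: pext_def)
      also have "ct * (hsemi \<alpha> {0..s} (\<lambda>x. Y x - Z x) + norm (Y 0 - Z 0)) powr \<beta> \<le> ct * E powr \<beta>"
      proof -
        have "holder \<alpha> {0..s} (\<lambda>x. Y x - Z x) \<and> hsemi \<alpha> {0..s} (\<lambda>x. Y x - Z x) \<le> hsemi \<alpha> {0..t1} (\<lambda>x. Y x - Z x)"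
          using holder_mono[OF hYZ] that by auto
        moreover have "0 \<le> hsemi \<alpha> {0..s} (\<lambda>x. Y x - Z x)"
          using calculation hsemi_nonneg by blast
        ultimately show ?thesis unfolding E_def using c0 assms
          by (intro mult_left_mono powr_mono2) auto
      qed
      finally show ?thesis .
    qed
    have bnd: "norm (D t - D s) \<le> (2 * ct powr (1 - \<theta>) * c powr \<theta> * (1 + R powr \<beta>) powr \<theta> * E powr (\<beta> * (1 - \<theta>))) * \<bar>t - s\<bar> powr (\<alpha> * \<beta> * \<theta>)"
      if st: "s \<in> {t0..t1}" "t \<in> {t0..t1}" for s t
    proof -
      define A where "A = 2 * c * (1 + R powr \<beta>) * \<bar>t - s\<bar> powr (\<alpha> * \<beta>)"
      define B where "B = 2 * ct * E powr \<beta>"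
      have "norm (D t - D s) \<le> norm (F t (pext t1 Y) - F s (pext t1 Y)) + norm (F t (pext t1 Z) - F s (pext t1 Z))"
        unfolding D_def by (smt (verit, ccfv_threshold) add_diff_cancel_left' diff_add_cancel diff_diff_eq2 norm_triangle_ineq4)
      also have "\<dots> \<le> c * (1 + hsemi \<alpha> {t0..t1} Y powr \<beta>) * \<bar>t - s\<bar> powr (\<alpha> * \<beta>) + c * (1 + hsemi \<alpha> {t0..t1} Z powr \<beta>) * \<bar>t - s\<bar> powr (\<alpha> * \<beta>)"
        using k[OF assms(11) st] k[OF assms(12) st] by (rule add_mono)
      also have "\<dots> \<le> A"
      proof -
        have "hsemi \<alpha> {t0..t1} Y powr \<beta> \<le> R powr \<beta>" "hsemi \<alpha> {t0..t1} Z powr \<beta> \<le> R powr \<beta>"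
          using R hYs hZs assms by (auto intro: powr_mono2)
        then have "c * (1 + hsemi \<alpha> {t0..t1} Y powr \<beta>) * \<bar>t - s\<bar> powr (\<alpha> * \<beta>) \<le> c * (1 + R powr \<beta>) * \<bar>t - s\<bar> powr (\<alpha> * \<beta>)"
             "c * (1 + hsemi \<alpha> {t0..t1} Z powr \<beta>) * \<bar>t - s\<bar> powr (\<alpha> * \<beta>) \<le> c * (1 + R powr \<beta>) * \<bar>t - s\<bar> powr (\<alpha> * \<beta>)"
          using c0 by (auto intro!: mult_right_mono mult_left_mono)
        then show ?thesis unfolding A_def by linarith
      qed
      finally have a: "norm (D t - D s) \<le> A" .
      have "norm (D t - D s) \<le> norm (D t) + norm (D s)" by (rule norm_triangle_ineq4)
      also have "\<dots> \<le> B" using DB[OF st(1)] DB[OF st(2)] unfolding B_def by linarith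
      finally have b: "norm (D t - D s) \<le> B" .
      have "norm (D t - D s) \<le> A powr \<theta> * B powr (1 - \<theta>)"
        using min_powr[OF _ a b th] by simp
      also have "A powr \<theta> * B powr (1 - \<theta>) = (2 powr \<theta> * 2 powr (1 - \<theta>)) * ct powr (1 - \<theta>) * c powr \<theta> * (1 + R powr \<beta>) powr \<theta> * E powr (\<beta> * (1 - \<theta>)) * \<bar>t - s\<bar> powr (\<alpha> * \<beta> * \<theta>)"
        unfolding A_def B_def by (simp add: powr_mult powr_powr)
      also have "2 powr \<theta> * 2 powr (1 - \<theta>) = (2::real)"
        by (simp add: powr_add[symmetric])
      finally show ?thesis by simp
    qed
    have "holder (\<alpha> * \<beta> * \<theta>) {t0..t1} D \<and> hsemi (\<alpha> * \<beta> * \<theta>) {t0..t1} D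
        \<le> 2 * ct powr (1 - \<theta>) * c powr \<theta> * (1 + R powr \<beta>) powr \<theta> * E powr (\<beta> * (1 - \<theta>))"
      using bnd by (intro holder_of_bound) auto
    then show ?thesis unfolding D_def E_def .
  qed
  show ?thesis using P1 P2 by blast
qed

end
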